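(* Let $D$ be a directed acyclic graph with $n$ nodes and exactly one source. Then the burning number of $D$ is at most $\left\lceil \sqrt{2n+\tfrac14}-\tfrac12\right\rceil$.
   Context: Burning process on a digraph $D$: a sequence $(x_1,\ldots,x_b)$ of nodes is a burning sequence for $D$ if after $b$ steps of the following process every node of $D$ is burned; the $i$-th step consists of first burning all out-neighbours of all currently burned nodes, and then burning the node $x_i$. The burning number of $D$ is the length of a shortest burning sequence. Equivalently, with $N^+_k(v)$ the set of nodes reachable from $v$ by a directed path with at most $k$ arcs, the burning number is the least $b$ such that there are nodes $v_1,\ldots,v_b$ with $V(D)=\bigcup_{i=1}^b N^+_{i-1}(v_i)$. *)

theory Defs
  imports Complex_Main
begin

definition digraph :: "'a set \<Rightarrow> ('a \<times> 'a) set \<Rightarrow> bool" where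
  "digraph V E \<longleftrightarrow> finite V \<and> E \<subseteq> V \<times> V"

definition dag :: "'a set \<Rightarrow> ('a \<times> 'a) set \<Rightarrow> bool" where
  "dag V E \<longleftrightarrow> digraph V E \<and> acyclic E"

definition sources :: "'a set \<Rightarrow> ('a \<times> 'a) set \<Rightarrow> 'a set" where
  "sources V E = {v \<in> V. \<forall>u. (u, v) \<notin> E}"

definition out_ball :: "('a \<times> 'a) set \<Rightarrow> nat \<Rightarrow> 'a \<Rightarrow> 'a set" where
  "out_ball E k v = {w. \<exists>j\<le>k. (v, w) \<in> E ^^ j}"

definition is_burning_seq :: "'a set \<Rightarrow> ('a \<times> 'a) set \<Rightarrow> 'a list \<Rightarrow> bool" where
  "is_burning_seq V E vs \<longleftrightarrow> set vs \<subseteq> V \<and>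
     V = (\<Union>i<length vs. out_ball E i (vs ! i))"

definition burning_number :: "'a set \<Rightarrow> ('a \<times> 'a) set \<Rightarrow> nat" where
  "burning_number V E = (LEAST b. \<exists>vs. length vs = b \<and> is_burning_seq V E vs)"

end

theory Submission
  imports Defs
begin

lemma relpow_mono_sub: "(A::('a\<times>'a) set) \<subseteq> B \<Longrightarrow> A ^^ j \<subseteq> B ^^ j"
  by (induction j) (auto simp: relcomp_mono)

lemma rtrancl_in_V: "(x, y) \<in> E\<^sup>* \<Longrightarrow> E \<subseteq> V \<times> V \<Longrightarrow> x \<in> V \<Longrightarrow> y \<in> V"
  by (induction rule: rtrancl_induct) auto

lemma relpow_prefix:
  fixes E :: "('a \<times> 'a) set"
  assumes "(x, y) \<in> E ^^ j" "k \<le> j"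
  shows "\<exists>z. (x, z) \<in> E ^^ k"
proof -
  have "j = k + (j - k)" using assms by simp
  then have "(x, y) \<in> E ^^ k O E ^^ (j - k)" using assms relpow_add by metis
  then show ?thesis by blast
qed

lemma card_reach:
  assumes "finite V" "E \<subseteq> V \<times> V" "acyclic E"
  shows "u \<in> V \<Longrightarrow> (u, w) \<in> E ^^ k \<Longrightarrow> Suc k \<le> card {x. (u, x) \<in> E\<^sup>*}"
proof (induction k arbitrary: u)
  case 0
  have "{x. (u, x) \<in> E\<^sup>*} \<subseteq> V" using rtrancl_in_V[OF _ assms(2) 0(1)] by blast
  then have fin: "finite {x. (u, x) \<in> E\<^sup>*}" using assms(1) finite_subset by blast
  have "u \<in> {x. (u, x) \<in> E\<^sup>*}" by simp
  then have "card {x. (u, x) \<in> E\<^sup>*} \<noteq> 0" using fin by auto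
  then show ?case by simp
next
  case (Suc k)
  obtain y where y: "(u, y) \<in> E" "(y, w) \<in> E ^^ k" using relpow_Suc_D2[OF Suc(3)] by blast
  have yV: "y \<in> V" using y assms(2) by auto
  have IH: "Suc k \<le> card {x. (y, x) \<in> E\<^sup>*}" using Suc.IH[OF yV y(2)] .
  have "{x. (u, x) \<in> E\<^sup>*} \<subseteq> V" using rtrancl_in_V[OF _ assms(2) Suc(2)] by blast
  then have fin: "finite {x. (u, x) \<in> E\<^sup>*}" using assms(1) finite_subset by blast
  have nu: "(y, u) \<notin> E\<^sup>*"
  proof
    assume "(y, u) \<in> E\<^sup>*"
    then have "(u, u) \<in> E\<^sup>+" using y(1) by (meson rtrancl_into_trancl2)
    then show False using assms(3) unfolding acyclic_def by blast
  qed
  have sub: "{x. (y, x) \<in> E\<^sup>*} \<subseteq> {x. (u, x) \<in> E\<^sup>*} - {u}"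
    using nu y(1) by (auto intro: converse_rtrancl_into_rtrancl)
  have "card {x. (y, x) \<in> E\<^sup>*} \<le> card ({x. (u, x) \<in> E\<^sup>*} - {u})"
    using card_mono[OF _ sub] fin by blast
  also have "\<dots> = card {x. (u, x) \<in> E\<^sup>*} - 1" using fin by simp
  finally show ?case using IH by linarith
qed

lemma main_burn:
  "finite V \<Longrightarrow> E \<subseteq> V \<times> V \<Longrightarrow> acyclic E \<Longrightarrow> s \<in> V \<Longrightarrow> \<forall>v\<in>V. (s, v) \<in> E\<^sup>* \<Longrightarrow>
   2 * card V \<le> b * (b + 1) \<Longrightarrow>
   \<exists>vs. length vs = b \<and> set vs \<subseteq> V \<and> V \<subseteq> (\<Union>i<b. out_ball E i (vs ! i))"
proof (induction b arbitrary: V E)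
  case 0
  then have "card V = 0" by simp
  then have "V = {}" using 0(1) by simp
  then show ?case using 0(4) by simp
next
  case (Suc k)
  note fV = Suc.prems(1) and EV = Suc.prems(2) and acy = Suc.prems(3) and sV = Suc.prems(4)
    and reach = Suc.prems(5) and cardV = Suc.prems(6)
  show ?case
  proof (cases "\<exists>w. (s, w) \<in> E ^^ Suc k")
    case False
    have "V \<subseteq> (\<Union>i<Suc k. out_ball E i (replicate (Suc k) s ! i))"
    proof
      fix v assume "v \<in> V"
      then obtain j where j: "(s, v) \<in> E ^^ j" using reach rtrancl_power by blast
      have "j \<le> k"
      proof (rule ccontr)
        assume "\<not> j \<le> k"
        then show False using relpow_prefix[OF j, of "Suc k"] False by auto
      qed
      moreover have "replicate (Suc k) s ! k = s" by (simp del: replicate_Suc)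
      ultimately have "v \<in> out_ball E k (replicate (Suc k) s ! k)" using j unfolding out_ball_def by auto
      then show "v \<in> (\<Union>i<Suc k. out_ball E i (replicate (Suc k) s ! i))" by blast
    qed
    then show ?thesis using sV by (intro exI[of _ "replicate (Suc k) s"]) auto
  next
    case True
    then obtain w0 where w0: "(s, w0) \<in> E ^^ Suc k" by blast
    define S where "S = {x. \<exists>w. (x, w) \<in> E ^^ Suc k}"
    have "s \<in> S" using w0 S_def by blast
    have finE: "finite E" using fV EV by (meson finite_SigmaI rev_finite_subset)
    have wf: "wf (E\<inverse>)" using finite_acyclic_wf_converse[OF finE acy] .
    obtain m where m: "m \<in> S" "\<forall>y. (y, m) \<in> E\<inverse> \<longrightarrow> y \<notin> S"
      using wf_eq_minimal[THEN iffD1, OF wf, rule_format, OF \<open>s \<in> S\<close>] by blast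
    obtain w where w: "(m, w) \<in> E ^^ Suc k" using m(1) S_def by blast
    obtain u where u: "(m, u) \<in> E" "(u, w) \<in> E ^^ k" using relpow_Suc_D2[OF w] by blast
    have uS: "u \<notin> S" using m(2) u(1) by auto
    have short: "\<And>j x. (u, x) \<in> E ^^ j \<Longrightarrow> j \<le> k"
    proof (rule ccontr)
      fix j x assume jx: "(u, x) \<in> E ^^ j" "\<not> j \<le> k"
      then show False using relpow_prefix[OF jx(1), of "Suc k"] uS S_def by auto
    qed
    define R where "R = {x. (u, x) \<in> E\<^sup>*}"
    have uV: "u \<in> V" using u(1) EV by auto
    have RV: "R \<subseteq> V" using rtrancl_in_V[OF _ EV uV] R_def by auto
    have Rball: "R \<subseteq> out_ball E k u"
    proof
      fix x assume "x \<in> R"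
      then obtain j where "(u, x) \<in> E ^^ j" using R_def rtrancl_power by blast
      then show "x \<in> out_ball E k u" using short unfolding out_ball_def by blast
    qed
    have cardR: "Suc k \<le> card R" using card_reach[OF fV EV acy uV u(2)] R_def by simp
    have sR: "s \<notin> R"
    proof
      assume "s \<in> R"
      then obtain i where "(u, s) \<in> E ^^ i" using R_def rtrancl_power by blast
      then have "(u, w0) \<in> E ^^ (i + Suc k)" using w0 relpow_add by blast
      then show False using short by fastforce
    qed
    define V' where "V' = V - R"
    define E' where "E' = E \<inter> V' \<times> V'"
    have fV': "finite V'" using fV V'_def by simp
    have EV': "E' \<subseteq> V' \<times> V'" using E'_def by auto
    have acy': "acyclic E'" using acy E'_def acyclic_subset by blast
    have sV': "s \<in> V'" using sV sR V'_def by simp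
    have reach_aux: "(s, z) \<in> E\<^sup>* \<Longrightarrow> z \<notin> R \<longrightarrow> (s, z) \<in> E'\<^sup>*" for z
    proof (induction rule: rtrancl_induct)
      case base
      then show ?case by simp
    next
      case (step y z)
      show ?case
      proof
        assume zR: "z \<notin> R"
        have yR: "y \<notin> R" using zR step(2) R_def by (auto intro: rtrancl_into_rtrancl)
        have "(y, z) \<in> E'" using step(2) EV yR zR V'_def E'_def by auto
        then show "(s, z) \<in> E'\<^sup>*" using step(3) yR by (meson rtrancl.rtrancl_into_rtrancl)
      qed
    qed
    have reach': "\<forall>v\<in>V'. (s, v) \<in> E'\<^sup>*" using reach reach_aux V'_def by auto
    have "card V' = card V - card R" using V'_def RV fV by (simp add: card_Diff_subset finite_subset)
    moreover have "card R \<le> card V" using RV fV card_mono by blast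
    ultimately have card': "2 * card V' \<le> k * (k + 1)" using cardV cardR by (simp add: algebra_simps)
    obtain vs' where vs': "length vs' = k" "set vs' \<subseteq> V'" "V' \<subseteq> (\<Union>i<k. out_ball E' i (vs' ! i))"
      using Suc.IH[OF fV' EV' acy' sV' reach' card'] by blast
    have ballmono: "out_ball E' i x \<subseteq> out_ball E i x" for i x
      unfolding out_ball_def using relpow_mono_sub[of E' E] E'_def by blast
    have cover: "V \<subseteq> (\<Union>i<Suc k. out_ball E i ((vs' @ [u]) ! i))"
    proof
      fix v assume vV: "v \<in> V"
      show "v \<in> (\<Union>i<Suc k. out_ball E i ((vs' @ [u]) ! i))"
      proof (cases "v \<in> R")
        case True
        then have "v \<in> out_ball E k ((vs' @ [u]) ! k)" using Rball vs'(1) by auto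
        then show ?thesis by blast
      next
        case False
        then have "v \<in> V'" using vV V'_def by simp
        then obtain i where i: "i < k" "v \<in> out_ball E' i (vs' ! i)" using vs'(3) by blast
        then have "v \<in> out_ball E i ((vs' @ [u]) ! i)" using ballmono vs'(1) by (auto simp: nth_append)
        then show ?thesis using i(1) by auto
      qed
    qed
    show ?thesis
      using vs' uV cover V'_def by (intro exI[of _ "vs' @ [u]"]) auto
  qed
qed

theorem mainTheorem5:
  fixes V :: "'a set" and E :: "('a \<times> 'a) set"
  assumes "dag V E"
    and "card (sources V E) = 1"
  shows "int (burning_number V E) \<le> \<lceil>sqrt (2 * real (card V) + 1/4) - 1/2\<rceil>"
proof -
  have fV: "finite V" and EV: "E \<subseteq> V \<times> V" and acy: "acyclic E"
    using assms(1) unfolding dag_def digraph_def by auto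
  obtain s where src: "sources V E = {s}" using assms(2) card_1_singletonE by blast
  have sV: "s \<in> V" using src unfolding sources_def by auto
  have finE: "finite E" using fV EV by (meson finite_SigmaI rev_finite_subset)
  have wfE: "wf E" using finite_acyclic_wf[OF finE acy] .
  have reachP: "v \<in> V \<longrightarrow> (s, v) \<in> E\<^sup>*" for v
  proof (induction v rule: wf_induct[OF wfE])
    case (1 v)
    show ?case
    proof
      assume vV: "v \<in> V"
      show "(s, v) \<in> E\<^sup>*"
      proof (cases "\<exists>u. (u, v) \<in> E")
        case True
        then obtain u where u: "(u, v) \<in> E" by blast
        then have "u \<in> V" using EV by auto
        then have "(s, u) \<in> E\<^sup>*" using 1 u by blast
        then show ?thesis using u by (meson rtrancl.rtrancl_into_rtrancl)
      next
        case False
        then have "v \<in> sources V E" using vV unfolding sources_def by auto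
        then show ?thesis using src by simp
      qed
    qed
  qed
  define x where "x = sqrt (2 * real (card V) + 1/4) - 1/2"
  have sq: "sqrt (2 * real (card V) + 1/4) \<ge> 1/2"
    by (rule real_le_rsqrt) (auto simp: power2_eq_square)
  have x0: "x \<ge> 0" using sq x_def by simp
  define b where "b = nat \<lceil>x\<rceil>"
  have bx: "real b \<ge> x" using x0 b_def by linarith
  have "(x + 1/2)^2 = 2 * real (card V) + 1/4" using x_def by simp
  moreover have "(x + 1/2)^2 \<le> (real b + 1/2)^2" using bx x0 by (intro power_mono) auto
  ultimately have "2 * real (card V) \<le> real b * (real b + 1)" by (simp add: power2_eq_square algebra_simps)
  then have cb: "2 * card V \<le> b * (b + 1)" by (metis of_nat_le_iff of_nat_mult of_nat_Suc of_nat_1 Suc_eq_plus1 of_nat_add of_nat_numeral)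
  obtain vs where vs: "length vs = b" "set vs \<subseteq> V" "V \<subseteq> (\<Union>i<b. out_ball E i (vs ! i))"
    using main_burn[OF fV EV acy sV _ cb] reachP by blast
  have "(\<Union>i<b. out_ball E i (vs ! i)) \<subseteq> V"
  proof
    fix y assume "y \<in> (\<Union>i<b. out_ball E i (vs ! i))"
    then obtain i j where ij: "i < b" "(vs ! i, y) \<in> E ^^ j" unfolding out_ball_def by blast
    have "vs ! i \<in> V" using ij(1) vs(1,2) nth_mem by blast
    then show "y \<in> V" using rtrancl_in_V[OF _ EV] ij(2) relpow_imp_rtrancl by blast
  qed
  then have "is_burning_seq V E vs" using vs unfolding is_burning_seq_def by blast
  then have "burning_number V E \<le> b" unfolding burning_number_def using vs(1) by (intro Least_le) blast
  then show ?thesis using b_def x_def x0 by linarith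
qed

end
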